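(* Let $\alpha\ge0$ and $p\ge\dfrac{9+3\alpha+\sqrt{9\alpha^2+30\alpha+33}}{4}$. Then $p>\alpha+2$ and $F_{p,\alpha}(r)\le0$ for all $r\in(0,1]$, where $$F_{p,\alpha}(r)=r^{\,p-4-\frac{3\alpha}{2}}\int_0^{\frac{2r}{1+r}}\frac{t^{\frac{\alpha+2}{p}-1}}{(1-t)^{\frac{\alpha+2}{p}}}\,dt-\int_0^1\frac{t^{\frac{\alpha+2}{p}-1}}{(1-t)^{\frac{\alpha+2}{p}}}\,dt .$$ *)

theory Defs
  imports "HOL-Analysis.Analysis"
begin

text \<open>Integrand t^(beta-1) / (1-t)^beta with beta = (alpha+2)/p, integrated
  (Lebesgue) over [0,x]; the integrals are improper at 0 and at 1.\<close>

definition kern :: "real \<Rightarrow> real \<Rightarrow> real \<Rightarrow> real" where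
  "kern p \<alpha> t = t powr ((\<alpha> + 2) / p - 1) / (1 - t) powr ((\<alpha> + 2) / p)"

definition F :: "real \<Rightarrow> real \<Rightarrow> real \<Rightarrow> real" where
  "F p \<alpha> r =
     r powr (p - 4 - 3 * \<alpha> / 2) * (LBINT t:{0..2 * r / (1 + r)}. kern p \<alpha> t)
     - (LBINT t:{0..1}. kern p \<alpha> t)"

end

theory Submission
  imports Defs
begin


lemma params:
  fixes \<alpha> p :: real
  assumes "\<alpha> \<ge> 0"
    and "p \<ge> (9 + 3 * \<alpha> + sqrt (9 * \<alpha>^2 + 30 * \<alpha> + 33)) / 4"
  shows "p > \<alpha> + 2" "2*p^2 - 9*p - 3*\<alpha>*p + 3*\<alpha> + 6 \<ge> 0"
proof -
  let ?D = "9 * \<alpha>^2 + 30 * \<alpha> + 33"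
  have D0: "?D \<ge> 0" using assms(1) by (intro add_nonneg_nonneg) auto
  have s: "sqrt ?D ^ 2 = ?D" by (rule real_sqrt_pow2[OF D0])
  have s0: "sqrt ?D \<ge> 0" using D0 by simp
  have "(\<alpha> + 1)^2 < ?D" using assms(1) by (simp add: power2_eq_square algebra_simps) (smt (verit) mult_nonneg_nonneg)
  hence "\<alpha> + 1 < sqrt ?D" using assms(1) by (metis abs_of_nonneg add_nonneg_nonneg real_less_rsqrt zero_le_one)
  then show "p > \<alpha> + 2" using assms(2) by (simp add: field_simps)
  have h: "4*p - 9 - 3*\<alpha> \<ge> sqrt ?D" using assms(2) by (simp add: field_simps)
  hence "(4*p - 9 - 3*\<alpha>)^2 \<ge> sqrt ?D ^ 2" using s0 by (intro power_mono) auto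
  thus "2*p^2 - 9*p - 3*\<alpha>*p + 3*\<alpha> + 6 \<ge> 0" unfolding s by (simp add: power2_eq_square algebra_simps)
qed

lemma key_ineq:
  fixes \<alpha> p :: real
  assumes "\<alpha> \<ge> 0" "p > \<alpha> + 2" "2*p^2 - 9*p - 3*\<alpha>*p + 3*\<alpha> + 6 \<ge> 0"
  shows "-(p - 4 - 3 * \<alpha> / 2) \<le> (3 * ((\<alpha> + 2) / p) - 1) / 2"
proof -
  have p: "p > 0" using assms by linarith
  have h: "0 \<le> 2*p*(2*p^2 - 9*p - 3*\<alpha>*p + 3*\<alpha> + 6)" using p assms(3) by simp
  have "-(p - 4 - 3 * \<alpha> / 2) * p \<le> (3 * ((\<alpha> + 2) / p) - 1) / 2 * p"
    using p h by (simp add: field_simps) (simp add: power2_eq_square algebra_simps)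
  thus ?thesis using p by simp
qed


definition kk :: "real \<Rightarrow> real \<Rightarrow> real" where
  "kk b t = t powr (b - 1) / (1 - t) powr b"

lemma kk_alt: "kk b t = t powr (b - 1) * (1 - t) powr ((1 - b) - 1)"
  unfolding kk_def by (simp add: powr_minus divide_inverse)

lemma kk_nonneg: "kk b t \<ge> 0"
  unfolding kk_def by simp

lemma kk_set_int:
  assumes "0 < b" "b < 1"
  shows "set_integrable lborel {0..1} (kk b)"
proof -
  have "set_integrable lborel {0..1} (\<lambda>t. t powr (b - 1) * (1 - t) powr ((1 - b) - 1))"
    by (rule integrable_Beta) (use assms in auto)
  thus ?thesis unfolding kk_alt[abs_def] .
qed

lemma kk_int:
  assumes "0 < b" "b < 1"
  shows "kk b integrable_on {0..1}"
  using set_borel_integral_eq_integral(1)[OF kk_set_int[OF assms]] .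

lemma kk_LBINT:
  assumes "0 < b" "b < 1" "0 \<le> x" "x \<le> 1"
  shows "(LBINT t:{0..x}. kk b t) = integral {0..x} (kk b)"
proof -
  have "set_integrable lborel {0..x} (kk b)"
    by (rule set_integrable_subset[OF kk_set_int[OF assms(1,2)]]) (use assms in auto)
  thus ?thesis by (rule set_borel_integral_eq_integral(2))
qed

lemma kk_cont: "0 < t \<Longrightarrow> t < 1 \<Longrightarrow> continuous (at t) (kk b)"
  unfolding kk_def by (auto intro!: continuous_intros)

lemma G_deriv:
  assumes "0 < b" "b < 1" "0 < x" "x < 1"
  shows "((\<lambda>u. integral {0..u} (kk b)) has_real_derivative kk b x) (at x)"
proof -
  have "((\<lambda>u. integral {0..u} (kk b)) has_vector_derivative kk b x) (at x within ({0..1} - {}))"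
    by (rule integral_has_vector_derivative_continuous_at[OF kk_int[OF assms(1,2)]])
       (use assms kk_cont[of x b] in \<open>auto intro: continuous_at_imp_continuous_at_within\<close>)
  moreover have "at x within ({0..1} - {}) = at x"
    by (rule at_within_interior) (use assms in auto)
  ultimately show ?thesis by (simp add: has_real_derivative_iff_has_vector_derivative)
qed

lemma G_cont:
  assumes "0 < b" "b < 1"
  shows "continuous_on {0..1} (\<lambda>u. integral {0..u} (kk b))"
  by (rule indefinite_integral_continuous_1[OF kk_int[OF assms]])

lemma G_nonneg:
  assumes "0 < b" "b < 1" "0 \<le> x" "x \<le> 1"
  shows "integral {0..x} (kk b) \<ge> 0"
  by (rule integral_nonneg) (use integrable_on_subinterval[OF kk_int[OF assms(1,2)]] assms kk_nonneg in auto)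

lemma bracket:
  fixes b c t :: real
  assumes "0 < b" "b < 1" "c \<le> (3*b-1)/2" "0 < t" "t < 1"
  shows "-t/2 + (2-t)*b/(2*(1-t)) - c \<ge> 0"
proof -
  have h1: "2*c*(1-t) \<le> (3*b-1)*(1-t)" using assms by (intro mult_right_mono) auto
  have h2: "(1-t)^2 - b*(1-2*t) \<ge> 0"
  proof (cases "t \<le> 1/2")
    case True
    have "b*(1-2*t) \<le> 1*(1-2*t)" using True assms by (intro mult_right_mono) auto
    thus ?thesis by (simp add: power2_eq_square algebra_simps) (smt (verit) assms(4) mult_nonneg_nonneg)
  next
    case False
    have "b*(1-2*t) \<le> 0" using False assms by (simp add: mult_nonneg_nonpos)
    thus ?thesis by (smt (verit) zero_le_power2)
  qed
  have "(-t/2 + (2-t)*b/(2*(1-t)) - c) * (2*(1-t)) = -t*(1-t) + (2-t)*b - 2*c*(1-t)"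
    using assms by (simp add: field_simps)
  also have "\<dots> \<ge> 0" using h1 h2 by (simp add: power2_eq_square algebra_simps)
  finally show ?thesis using assms by (simp add: zero_le_mult_iff)
qed

lemma L:
  fixes b c x :: real
  assumes b: "0 < b" "b < 1" and c: "c \<le> (3*b-1)/2" and x: "0 < x" "x < 1"
  shows "c * integral {0..x} (kk b) \<le> x*(2-x)/2 * kk b x"
proof -
  define G where "G = (\<lambda>u. integral {0..u} (kk b))"
  define \<psi> where "\<psi> = (\<lambda>t. (2-t)/2 * t powr b * (1-t) powr (-b) - c * G t)"
  have "\<psi> 0 \<le> \<psi> x"
  proof (rule DERIV_nonneg_imp_increasing_open[of 0 x \<psi>])
    show "0 \<le> x" using x by simp
  next
    fix t assume t: "0 < t" "t < x"
    define A where "A = t powr (b-1)"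
    define B where "B = (1-t) powr (-b)"
    have A: "A > 0" using t by (simp add: A_def)
    have B: "B > 0" using t x by (simp add: B_def)
    have tb: "t powr b = t * A" using t by (simp add: A_def powr_mult_base)
    have tb1: "(1-t) powr (-b-1) = B / (1-t)" using t x by (simp add: B_def powr_diff)
    have kt: "kk b t = A * B" using t by (simp add: kk_def A_def B_def powr_minus divide_inverse)
    have d1: "((\<lambda>t. t powr b) has_real_derivative b * t powr (b-1)) (at t)"
      using t by (auto intro!: derivative_eq_intros)
    have d2: "((\<lambda>t. (1-t) powr (-b)) has_real_derivative b * (1-t) powr (-b-1)) (at t)"
      using t x by (auto intro!: derivative_eq_intros)
    have d3: "((\<lambda>t. (2-t)/2) has_real_derivative -1/2) (at t)"
      by (auto intro!: derivative_eq_intros)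
    let ?E = "((-1/2) * t powr b + b * t powr (b-1) * ((2-t)/2)) * (1-t) powr (-b)
       + b*(1-t) powr (-b-1) * ((2-t)/2 * t powr b) - c * kk b t"
    have "(\<psi> has_real_derivative ?E) (at t)"
      unfolding \<psi>_def G_def
      by (rule DERIV_diff[OF DERIV_mult[OF DERIV_mult[OF d3 d1] d2] DERIV_cmult[OF G_deriv]]) (use t x b in auto)
    moreover have "?E \<ge> 0"
    proof -
      have "?E = A * B * (-t/2 + (2-t)*b/(2*(1-t)) - c)"
        unfolding tb tb1 kt A_def[symmetric] B_def[symmetric] using t x
        by (simp add: field_simps)
      also have "\<dots> \<ge> 0" using A B bracket[OF b c, of t] t x by simp
      finally show ?thesis .
    qed
    ultimately show "\<exists>y. (\<psi> has_real_derivative y) (at t) \<and> 0 \<le> y" by blast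
  next
    have "continuous_on {0..x} G"
      using continuous_on_subset[OF G_cont[OF b]] x unfolding G_def by auto
    thus "continuous_on {0..x} \<psi>" unfolding \<psi>_def using x b
      by (auto intro!: continuous_intros continuous_on_powr')
  qed
  moreover have "\<psi> 0 = 0" by (simp add: \<psi>_def G_def)
  moreover have "\<psi> x = x*(2-x)/2 * kk b x - c * G x"
  proof -
    have xb: "x powr b = x * x powr (b-1)" using x by (simp add: powr_mult_base)
    have "\<psi> x = (2-x)/2 * (x * x powr (b-1)) * (1-x) powr (-b) - c * G x" unfolding \<psi>_def xb ..
    also have "\<dots> = x*(2-x)/2 * (x powr (b-1) * (1-x) powr (-b)) - c * G x" by (simp add: algebra_simps)
    also have "x powr (b-1) * (1-x) powr (-b) = kk b x" unfolding kk_def powr_minus divide_inverse ..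
    finally show ?thesis .
  qed
  ultimately show ?thesis unfolding G_def by simp
qed


lemma aux1: "s > 0 \<Longrightarrow> u > (0::real) \<Longrightarrow> (W / (s/u)) * (2/u^2) = W * (2/(s*u))"
  by (simp add: field_simps power2_eq_square)
lemma aux2: fixes s u :: real
  assumes "s > 0" "u > 0" "(W/q) * m = W * (2/(s*u))"
  shows "a * (W/q) * m * G + k * W = W * ((2/(s*u)) * (a * G + s*u/2 * k))"
proof -
  have "a * (W/q) * m * G + k * W = a * G * ((W/q) * m) + k * W" by (simp only: mult_ac)
  also have "\<dots> = a * G * (W * (2/(s*u))) + k * W" by (simp only: assms(3))
  also have "\<dots> = W * ((2/(s*u)) * (a * G + s*u/2 * k))" using assms(1,2) by (simp add: field_simps)
  finally show ?thesis .
qed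

lemma mono_part:
  fixes a b x :: real
  assumes b: "0 < b" "b < 1" and c: "-a \<le> (3*b-1)/2" and x: "0 < x" "x < 1"
  shows "(x/(2-x)) powr a * integral {0..x} (kk b) \<le> integral {0..1} (kk b)"
proof -
  define G where "G = (\<lambda>u. integral {0..u} (kk b))"
  define \<Phi> where "\<Phi> = (\<lambda>s. (s/(2-s)) powr a * G s)"
  have "\<Phi> x \<le> \<Phi> 1"
  proof (rule DERIV_nonneg_imp_increasing_open[of x 1 \<Phi>])
    show "x \<le> 1" using x by simp
  next
    fix s assume s: "x < s" "s < 1"
    define q where "q = s/(2-s)"
    define W where "W = q powr a"
    have q: "q > 0" using s x by (simp add: q_def)
    have W: "W > 0" using q by (simp add: W_def)
    have dq: "((\<lambda>s. s/(2-s)) has_real_derivative 2/(2-s)^2) (at s)"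
      using s by (auto intro!: derivative_eq_intros simp: field_simps power2_eq_square)
    have dw: "((\<lambda>s. (s/(2-s)) powr a) has_real_derivative a * (s/(2-s)) powr (a - of_nat 1) * (2/(2-s)^2)) (at s)"
      by (rule DERIV_fun_powr[OF dq]) (use q in \<open>simp add: q_def\<close>)
    have d: "(\<Phi> has_real_derivative (a * (s/(2-s)) powr (a - of_nat 1) * (2/(2-s)^2)) * G s + kk b s * (s/(2-s)) powr a) (at s)"
      unfolding \<Phi>_def G_def by (rule DERIV_mult[OF dw G_deriv]) (use s x b in auto)
    have qa1: "q powr (a - of_nat 1) = W / q"
      using q s x by (simp add: W_def q_def powr_diff)
    have qa1': "q powr (a - 1) = W / q"
      using qa1 by simp
    have "s > 0" "2 - s > 0" using s x by auto
    have Lc: "(-a) * G s \<le> s*(2-s)/2 * kk b s"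
      unfolding G_def by (rule L[OF b c]) (use s x in auto)
    have "(a * (s/(2-s)) powr (a - of_nat 1) * (2/(2-s)^2)) * G s + kk b s * (s/(2-s)) powr a
        = W * ((2/(s*(2-s))) * (a * G s + s*(2-s)/2 * kk b s))"
      unfolding q_def[symmetric] unfolding qa1 W_def[symmetric]
      by (rule aux2[OF \<open>s > 0\<close> \<open>2 - s > 0\<close>]) (unfold q_def, rule aux1[OF \<open>s > 0\<close> \<open>2 - s > 0\<close>])
    also have "\<dots> \<ge> 0" using W Lc s x
      by (intro mult_nonneg_nonneg) (auto intro!: divide_nonneg_pos)
    finally show "\<exists>y. (\<Phi> has_real_derivative y) (at s) \<and> 0 \<le> y" using d by blast
  next
    have "continuous_on {x..1} G"
      using continuous_on_subset[OF G_cont[OF b]] x unfolding G_def by auto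
    thus "continuous_on {x..1} \<Phi>" unfolding \<Phi>_def using x
      by (auto intro!: continuous_intros)
  qed
  thus ?thesis by (simp add: \<Phi>_def G_def)
qed

theorem mainTheorem5:
  fixes \<alpha> p :: real
  assumes "\<alpha> \<ge> 0"
    and "p \<ge> (9 + 3 * \<alpha> + sqrt (9 * \<alpha>^2 + 30 * \<alpha> + 33)) / 4"
  shows "p > \<alpha> + 2 \<and> (\<forall>r\<in>{0<..1}. F p \<alpha> r \<le> 0)"
proof -
  have P1: "p > \<alpha> + 2" and P2: "2*p^2 - 9*p - 3*\<alpha>*p + 3*\<alpha> + 6 \<ge> 0"
    using params[OF assms] by auto
  define b where "b = (\<alpha> + 2) / p"
  define a where "a = p - 4 - 3 * \<alpha> / 2"
  have p0: "p > 0" using P1 assms(1) by linarith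
  have b: "0 < b" "b < 1" using P1 p0 assms(1) by (auto simp: b_def field_simps)
  have c: "-a \<le> (3*b-1)/2" unfolding a_def b_def by (rule key_ineq[OF assms(1) P1 P2])
  have kern: "kern p \<alpha> = kk b" by (rule ext) (simp add: kern_def kk_def b_def)
  have "F p \<alpha> r \<le> 0" if r: "0 < r" "r \<le> 1" for r
  proof -
    define x where "x = 2 * r / (1 + r)"
    have x: "0 < x" "x \<le> 1" using r by (auto simp: x_def field_simps)
    have Fx: "F p \<alpha> r = r powr a * integral {0..x} (kk b) - integral {0..1} (kk b)"
      unfolding F_def kern a_def[symmetric] x_def[symmetric]
      using kk_LBINT[OF b] x by simp
    show ?thesis
    proof (cases "r = 1")
      case True
      thus ?thesis using Fx by (simp add: x_def)
    next
      case False
      hence x1: "x < 1" using r by (auto simp: x_def field_simps)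
      have "x / (2 - x) = r" using r by (simp add: x_def field_simps)
      thus ?thesis using mono_part[OF b c x(1) x1] Fx by simp
    qed
  qed
  thus ?thesis using P1 by auto
qed

end
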